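(* For every ${\bf L}\in\mathbb{S}^d_{++}$, $$\lambda_{\max}\big({\bf L}^{1/2}\,\mathrm{diag}({\bf L}^{-1})\,{\bf L}^{1/2}\big)\cdot\det({\bf L})^{1/d}\ge\det(\mathrm{diag}({\bf L}))^{1/d}.$$
   Context: $\mathrm{diag}({\bf A})$ denotes the diagonal matrix having the same diagonal as ${\bf A}$; $\mathbb{S}^d_{++}$ is the set of symmetric positive definite $d\times d$ matrices; $\lambda_{\max}$ the largest eigenvalue. *)

theory Defs
  imports "HOL-Analysis.Analysis"
begin

definition symmetric_mat :: "real^'n^'n \<Rightarrow> bool" where
  "symmetric_mat A \<longleftrightarrow> transpose A = A"

definition pos_def :: "real^'n^'n \<Rightarrow> bool" where
  "pos_def A \<longleftrightarrow> symmetric_mat A \<and> (\<forall>x. x \<noteq> 0 \<longrightarrow> x \<bullet> (A *v x) > 0)"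

definition pos_semidef :: "real^'n^'n \<Rightarrow> bool" where
  "pos_semidef A \<longleftrightarrow> symmetric_mat A \<and> (\<forall>x. x \<bullet> (A *v x) \<ge> 0)"

definition mat_sqrt :: "real^'n^'n \<Rightarrow> real^'n^'n" where
  "mat_sqrt A = (THE S. pos_semidef S \<and> S ** S = A)"

definition diag_part :: "real^'n^'n \<Rightarrow> real^'n^'n" where
  "diag_part A = (\<chi> i j. if i = j then A $ i $ i else 0)"

definition eigenvalues_mat :: "real^'n^'n \<Rightarrow> real set" where
  "eigenvalues_mat A = {c. \<exists>v. v \<noteq> 0 \<and> A *v v = c *\<^sub>R v}"

definition lambda_max :: "real^'n^'n \<Rightarrow> real" where
  "lambda_max A = Max (eigenvalues_mat A)"

end

theory Submission
  imports Defs
begin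

lemma quad0:
  fixes a b :: real
  assumes "\<And>t. a * t + b * t^2 \<le> 0"
  shows "a = 0"
proof (rule ccontr)
  assume "a \<noteq> 0"
  define c where "c = \<bar>b\<bar> + 1"
  have pos: "c > 0" "b + c > 0" unfolding c_def by auto
  define t where "t = a / c"
  have "a * t + b * t^2 = a^2 / c * (1 + b / c)"
    unfolding t_def using pos by (simp add: field_simps power2_eq_square)
  moreover have "a^2 / c > 0" using \<open>a \<noteq> 0\<close> pos by simp
  moreover have "1 + b / c > 0" using pos by (simp add: field_simps)
  ultimately have "a * t + b * t^2 > 0" by (metis mult_pos_pos)
  with assms[of t] show False by simp
qed

lemma sym_inner:
  fixes A :: "real^'n^'n"
  assumes "transpose A = A"
  shows "x \<bullet> (A *v y) = (A *v x) \<bullet> y"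
proof -
  have "x \<bullet> (A *v y) = (x v* A) \<bullet> y" by (simp add: dot_lmul_matrix)
  also have "x v* A = transpose A *v x" by simp
  finally show ?thesis using assms by simp
qed

definition good_eig :: "real^'n^'n \<Rightarrow> (real^'n) set \<Rightarrow> bool" where
  "good_eig A B \<longleftrightarrow> finite B \<and> pairwise orthogonal B \<and> (\<forall>b\<in>B. norm b = 1)
     \<and> (\<forall>b\<in>B. A *v b = (b \<bullet> (A *v b)) *\<^sub>R b)"

lemma good_eig_step:
  fixes A :: "real^'n^'n"
  assumes sym: "transpose A = A" and g: "good_eig A B" and lt: "card B < CARD('n)"
  shows "\<exists>v. v \<notin> B \<and> good_eig A (insert v B)"
proof -
  have fin: "finite B" and po: "pairwise orthogonal B" and nb: "\<And>b. b \<in> B \<Longrightarrow> norm b = 1"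
    and eb: "\<And>b. b \<in> B \<Longrightarrow> A *v b = (b \<bullet> (A *v b)) *\<^sub>R b"
    using g unfolding good_eig_def by auto
  have "0 \<notin> B" using nb by force
  then have ind: "independent B" using po pairwise_orthogonal_independent by blast
  then have "dim B = card B" using dim_eq_card_independent by blast
  then have "dim B < DIM(real^'n)" using lt by simp
  then obtain x :: "real^'n" where x: "x \<noteq> 0" "\<And>y. y \<in> span B \<Longrightarrow> orthogonal x y"
    using orthogonal_to_subspace_exists by blast
  define W where "W = {w::real^'n. \<forall>b\<in>B. b \<bullet> w = 0}"
  define K where "K = W \<inter> sphere 0 1"
  have "W = (\<Inter>b\<in>B. {w. b \<bullet> w = 0})" unfolding W_def by auto
  then have "closed W" by (simp add: closed_INT closed_hyperplane)
  then have "compact K" unfolding K_def by (metis Int_commute compact_Int_closed compact_sphere)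
  have "x /\<^sub>R norm x \<in> K"
    using x unfolding K_def W_def orthogonal_def
    by (auto simp: span_base inner_commute)
  then have "K \<noteq> {}" by auto
  have "continuous_on K (\<lambda>v. v \<bullet> (A *v v))" by (intro continuous_intros)
  then obtain v where vK: "v \<in> K" and vmax: "\<And>y. y \<in> K \<Longrightarrow> y \<bullet> (A *v y) \<le> v \<bullet> (A *v v)"
    using continuous_attains_sup[OF \<open>compact K\<close> \<open>K \<noteq> {}\<close>] by blast
  define \<mu> where "\<mu> = v \<bullet> (A *v v)"
  have vW: "v \<in> W" and nv: "norm v = 1" using vK unfolding K_def by auto
  have vv: "v \<bullet> v = 1" using nv by (simp add: dot_square_norm)
  have Wadd: "a + t *\<^sub>R c \<in> W" if "a \<in> W" "c \<in> W" for a c t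
    using that unfolding W_def by (auto simp: inner_add_right)
  have key: "w \<bullet> (A *v v) = \<mu> * (v \<bullet> w)" if wW: "w \<in> W" for w
  proof -
    have "(2 * (w \<bullet> (A *v v) - \<mu> * (v \<bullet> w))) * t + (w \<bullet> (A *v w) - \<mu> * (w \<bullet> w)) * t^2 \<le> 0" for t
    proof -
      define u where "u = v + t *\<^sub>R w"
      have uW: "u \<in> W" unfolding u_def using Wadd[OF vW wW] .
      have le: "u \<bullet> (A *v u) \<le> \<mu> * (u \<bullet> u)"
      proof (cases "u = 0")
        case True then show ?thesis by simp
      next
        case False
        then have nu: "norm u > 0" by simp
        have "u /\<^sub>R norm u \<in> K" using uW False unfolding K_def W_def by auto
        then have "(u /\<^sub>R norm u) \<bullet> (A *v (u /\<^sub>R norm u)) \<le> \<mu>" using vmax \<mu>_def by blast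
        then have "(u \<bullet> (A *v u)) / (norm u)^2 \<le> \<mu>"
          by (simp add: matrix_vector_mult_scaleR power2_eq_square divide_inverse mult.commute mult.left_commute)
        then have "u \<bullet> (A *v u) \<le> \<mu> * (norm u)^2" using nu by (simp add: divide_le_eq)
        then show ?thesis by (simp add: dot_square_norm)
      qed
      have s: "v \<bullet> (A *v w) = w \<bullet> (A *v v)"
        using sym_inner[OF sym, of v w] by (simp add: inner_commute)
      have e1: "u \<bullet> (A *v u) = \<mu> + 2 * t * (w \<bullet> (A *v v)) + t^2 * (w \<bullet> (A *v w))"
        unfolding u_def \<mu>_def using s
        by (simp add: matrix_vector_right_distrib matrix_vector_mult_scaleR inner_add_left inner_add_right
              algebra_simps power2_eq_square)
      have e2: "u \<bullet> u = 1 + 2 * t * (v \<bullet> w) + t^2 * (w \<bullet> w)"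
        unfolding u_def using vv
        by (simp add: inner_add_left inner_add_right inner_commute algebra_simps power2_eq_square)
      show ?thesis using le unfolding e1 e2 by (simp add: algebra_simps power2_eq_square)
    qed
    then have "2 * (w \<bullet> (A *v v) - \<mu> * (v \<bullet> w)) = 0" by (rule quad0)
    then show ?thesis by simp
  qed
  define z where "z = A *v v - \<mu> *\<^sub>R v"
  have zW: "z \<in> W"
    unfolding W_def
  proof (intro CollectI ballI)
    fix b assume bB: "b \<in> B"
    have bv: "b \<bullet> v = 0" using vW bB unfolding W_def by auto
    have "b \<bullet> (A *v v) = (A *v b) \<bullet> v" using sym_inner[OF sym] .
    also have "\<dots> = ((b \<bullet> (A *v b)) *\<^sub>R b) \<bullet> v"
      using eb[OF bB] by metis
    also have "\<dots> = (b \<bullet> (A *v b)) * (b \<bullet> v)" by simp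
    finally show "b \<bullet> z = 0" unfolding z_def using bv by (simp add: inner_diff_right)
  qed
  have "z \<bullet> z = z \<bullet> (A *v v) - \<mu> * (z \<bullet> v)" unfolding z_def
    by (simp add: inner_diff_right) 
  also have "\<dots> = 0" using key[OF zW] by (simp add: inner_commute)
  finally have "z = 0" by simp
  then have ev: "A *v v = (v \<bullet> (A *v v)) *\<^sub>R v" unfolding z_def \<mu>_def by simp
  have vnB: "v \<notin> B"
  proof
    assume "v \<in> B"
    then have "v \<bullet> v = 0" using vW unfolding W_def by auto
    with vv show False by simp
  qed
  have "pairwise orthogonal (insert v B)"
    using po vW unfolding W_def
    by (auto simp: pairwise_insert orthogonal_def inner_commute)
  then have "good_eig A (insert v B)"
    using g ev nv unfolding good_eig_def by auto
  with vnB show ?thesis by blast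
qed

lemma spectral:
  fixes A :: "real^'n^'n"
  assumes sym: "transpose A = A"
  obtains B :: "(real^'n) set" where "finite B" "card B = CARD('n)" "pairwise orthogonal B"
    "\<And>b. b \<in> B \<Longrightarrow> norm b = 1" "\<And>b. b \<in> B \<Longrightarrow> A *v b = (b \<bullet> (A *v b)) *\<^sub>R b"
    "\<And>x. (\<Sum>b\<in>B. (x \<bullet> b) *\<^sub>R b) = x"
proof -
  have "k \<le> CARD('n) \<Longrightarrow> \<exists>B. good_eig A B \<and> card B = k" for k
  proof (induction k)
    case 0
    show ?case by (rule exI[of _ "{}"]) (simp add: good_eig_def)
  next
    case (Suc k)
    then obtain B where B: "good_eig A B" "card B = k" by auto
    then obtain v where "v \<notin> B" "good_eig A (insert v B)"
      using good_eig_step[OF sym B(1)] Suc.prems by auto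
    then show ?case using B unfolding good_eig_def by (intro exI[of _ "insert v B"]) auto
  qed
  then obtain B where B: "good_eig A B" "card B = CARD('n)" by blast
  have fin: "finite B" and po: "pairwise orthogonal B" and nb: "\<And>b. b \<in> B \<Longrightarrow> norm b = 1"
    and eb: "\<And>b. b \<in> B \<Longrightarrow> A *v b = (b \<bullet> (A *v b)) *\<^sub>R b"
    using B(1) unfolding good_eig_def by auto
  have "0 \<notin> B" using nb by force
  then have ind: "independent B" using po pairwise_orthogonal_independent by blast
  have "card B = dim (UNIV :: (real^'n) set)" using B(2) by simp
  then have sp: "UNIV \<subseteq> span B" using card_eq_dim[of B UNIV] ind fin by simp
  show ?thesis
    using that[OF fin B(2) po nb eb] orthonormal_basis_expand[OF po nb _ fin] sp by blast
qed

definition onb :: "(real^'n) set \<Rightarrow> bool" where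
  "onb B \<longleftrightarrow> finite B \<and> pairwise orthogonal B \<and> (\<forall>b\<in>B. norm b = 1)
     \<and> (\<forall>x. (\<Sum>b\<in>B. (x \<bullet> b) *\<^sub>R b) = x)"

lemma onb_inner_basis:
  assumes "onb B" "b \<in> B" "b' \<in> B"
  shows "b \<bullet> b' = (if b' = b then 1 else 0)"
proof (cases "b' = b")
  case True
  then have "norm b = 1" using assms unfolding onb_def by auto
  then show ?thesis using True by (simp add: dot_square_norm)
next
  case False
  then show ?thesis using assms unfolding onb_def pairwise_def orthogonal_def by auto
qed

lemma onb_coef:
  assumes "onb B" "b \<in> B"
  shows "b \<bullet> (\<Sum>b'\<in>B. c b' *\<^sub>R b') = c b"
proof -
  have fin: "finite B" using assms unfolding onb_def by auto
  have "b \<bullet> (\<Sum>b'\<in>B. c b' *\<^sub>R b') = (\<Sum>b'\<in>B. c b' * (b \<bullet> b'))"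
    by (simp add: inner_sum_right)
  also have "\<dots> = (\<Sum>b'\<in>B. if b' = b then c b else 0)"
    by (rule sum.cong) (auto simp: onb_inner_basis[OF assms(1,2)])
  also have "\<dots> = c b" using fin assms(2) by simp
  finally show ?thesis .
qed

lemma onb_parseval:
  assumes "onb B"
  shows "x \<bullet> y = (\<Sum>b\<in>B. (x \<bullet> b) * (y \<bullet> b))"
proof -
  have "x \<bullet> y = x \<bullet> (\<Sum>b\<in>B. (y \<bullet> b) *\<^sub>R b)" using assms unfolding onb_def by simp
  also have "\<dots> = (\<Sum>b\<in>B. (x \<bullet> b) * (y \<bullet> b))"
    by (simp add: inner_sum_right mult.commute)
  finally show ?thesis .
qed

lemma onb_nonempty:
  assumes "onb (B :: (real^'n) set)"
  shows "B \<noteq> {}"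
proof
  assume "B = {}"
  then have "\<forall>x::real^'n. x = 0" using assms unfolding onb_def by simp
  moreover have "(axis undefined 1 :: real^'n) \<noteq> 0" by (simp add: axis_eq_0_iff)
  ultimately show False by blast
qed

lemma mat_of_basis_mult:
  fixes B :: "(real^'n) set"
  shows "(\<chi> i j. \<Sum>b\<in>B. g b * b$i * b$j) *v x = (\<Sum>b\<in>B. (g b * (b \<bullet> x)) *\<^sub>R b)"
proof -
  have "((\<chi> i j. \<Sum>b\<in>B. g b * b$i * b$j) *v x) $ i = (\<Sum>b\<in>B. (g b * (b \<bullet> x)) *\<^sub>R b) $ i" for i
  proof -
    have "((\<chi> i j. \<Sum>b\<in>B. g b * b$i * b$j) *v x) $ i = (\<Sum>j\<in>UNIV. \<Sum>b\<in>B. g b * b$i * b$j * x$j)"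
      by (simp add: matrix_vector_mult_def sum_distrib_right)
    also have "\<dots> = (\<Sum>b\<in>B. \<Sum>j\<in>UNIV. g b * b$i * b$j * x$j)" by (rule sum.swap)
    also have "\<dots> = (\<Sum>b\<in>B. (g b * (b \<bullet> x)) * b $ i)"
      by (simp add: inner_vec_def sum_distrib_left sum_distrib_right mult_ac)
    finally show ?thesis by (simp add: sum_component)
  qed
  then show ?thesis by (simp add: vec_eq_iff)
qed

lemma eig_expand:
  fixes A :: "real^'n^'n"
  assumes "onb B" "\<And>b. b \<in> B \<Longrightarrow> A *v b = (b \<bullet> (A *v b)) *\<^sub>R b"
  shows "A *v x = (\<Sum>b\<in>B. ((b \<bullet> (A *v b)) * (b \<bullet> x)) *\<^sub>R b)"
proof -
  have "A *v x = A *v (\<Sum>b\<in>B. (x \<bullet> b) *\<^sub>R b)" using assms(1) unfolding onb_def by simp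
  also have "\<dots> = (\<Sum>b\<in>B. (x \<bullet> b) *\<^sub>R (A *v b))"
    by (simp add: vec.sum matrix_vector_mult_scaleR)
  also have "\<dots> = (\<Sum>b\<in>B. ((b \<bullet> (A *v b)) * (b \<bullet> x)) *\<^sub>R b)"
  proof (rule sum.cong)
    fix b assume "b \<in> B"
    have "(x \<bullet> b) *\<^sub>R (A *v b) = (x \<bullet> b) *\<^sub>R ((b \<bullet> (A *v b)) *\<^sub>R b)"
      using assms(2)[OF \<open>b \<in> B\<close>] by metis
    then show "(x \<bullet> b) *\<^sub>R (A *v b) = ((b \<bullet> (A *v b)) * (b \<bullet> x)) *\<^sub>R b"
      by (simp add: inner_commute mult.commute)
  qed simp
  finally show ?thesis .
qed

lemma sym_spectral:
  fixes A :: "real^'n^'n"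
  assumes "transpose A = A"
  obtains B where "onb B" "card B = CARD('n)" "\<And>b. b \<in> B \<Longrightarrow> A *v b = (b \<bullet> (A *v b)) *\<^sub>R b"
proof -
  obtain B :: "(real^'n) set" where "finite B" "card B = CARD('n)" "pairwise orthogonal B"
    "\<And>b. b \<in> B \<Longrightarrow> norm b = 1" "\<And>b. b \<in> B \<Longrightarrow> A *v b = (b \<bullet> (A *v b)) *\<^sub>R b"
    "\<And>x. (\<Sum>b\<in>B. (x \<bullet> b) *\<^sub>R b) = x"
    using spectral[OF assms] by blast
  then show ?thesis using that unfolding onb_def by blast
qed

lemma eigenvalues_onb:
  fixes A :: "real^'n^'n"
  assumes sym: "transpose A = A" and B: "onb B" and eb: "\<And>b. b \<in> B \<Longrightarrow> A *v b = (b \<bullet> (A *v b)) *\<^sub>R b"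
  shows "eigenvalues_mat A = (\<lambda>b. b \<bullet> (A *v b)) ` B"
proof
  show "eigenvalues_mat A \<subseteq> (\<lambda>b. b \<bullet> (A *v b)) ` B"
  proof
    fix c assume "c \<in> eigenvalues_mat A"
    then obtain v where v: "v \<noteq> 0" "A *v v = c *\<^sub>R v" unfolding eigenvalues_mat_def by auto
    have "\<exists>b\<in>B. v \<bullet> b \<noteq> 0"
    proof (rule ccontr)
      assume "\<not> ?thesis"
      then have "(\<Sum>b\<in>B. (v \<bullet> b) *\<^sub>R b) = 0" by simp
      then show False using B v unfolding onb_def by simp
    qed
    then obtain b where bB: "b \<in> B" and vb: "v \<bullet> b \<noteq> 0" by blast
    have "c * (v \<bullet> b) = (A *v v) \<bullet> b" using v by simp
    also have "\<dots> = v \<bullet> (A *v b)" using sym_inner[OF sym, of v b] by simp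
    also have "\<dots> = v \<bullet> ((b \<bullet> (A *v b)) *\<^sub>R b)" using eb[OF bB] by metis
    also have "\<dots> = (b \<bullet> (A *v b)) * (v \<bullet> b)" by simp
    finally have "c = b \<bullet> (A *v b)" using vb by simp
    then show "c \<in> (\<lambda>b. b \<bullet> (A *v b)) ` B" using bB by blast
  qed
next
  show "(\<lambda>b. b \<bullet> (A *v b)) ` B \<subseteq> eigenvalues_mat A"
  proof
    fix c assume "c \<in> (\<lambda>b. b \<bullet> (A *v b)) ` B"
    then obtain b where bB: "b \<in> B" and c: "c = b \<bullet> (A *v b)" by blast
    have "b \<noteq> 0" using B bB unfolding onb_def by auto
    then show "c \<in> eigenvalues_mat A" using eb[OF bB] c unfolding eigenvalues_mat_def by auto
  qed
qed

lemma lambda_max_rayleigh: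
  fixes A :: "real^'n^'n"
  assumes sym: "transpose A = A"
  shows "x \<bullet> (A *v x) \<le> lambda_max A * (x \<bullet> x)"
proof -
  obtain B where B: "onb B" and eb: "\<And>b. b \<in> B \<Longrightarrow> A *v b = (b \<bullet> (A *v b)) *\<^sub>R b"
    using sym_spectral[OF sym] by blast
  have fin: "finite B" using B unfolding onb_def by auto
  have E: "eigenvalues_mat A = (\<lambda>b. b \<bullet> (A *v b)) ` B" by (rule eigenvalues_onb[OF sym B eb])
  have le: "b \<bullet> (A *v b) \<le> lambda_max A" if "b \<in> B" for b
    unfolding lambda_max_def E using fin that by simp
  have "x \<bullet> (A *v x) = x \<bullet> (\<Sum>b\<in>B. ((b \<bullet> (A *v b)) * (b \<bullet> x)) *\<^sub>R b)"
    using eig_expand[OF B eb] by metis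
  also have "\<dots> = (\<Sum>b\<in>B. (b \<bullet> (A *v b)) * (b \<bullet> x)^2)"
    by (simp add: inner_sum_right inner_commute power2_eq_square mult_ac)
  also have "\<dots> \<le> (\<Sum>b\<in>B. lambda_max A * (b \<bullet> x)^2)"
    by (rule sum_mono) (simp add: le mult_right_mono)
  also have "\<dots> = lambda_max A * (x \<bullet> x)"
    using onb_parseval[OF B, of x x] by (simp add: sum_distrib_left inner_commute power2_eq_square)
  finally show ?thesis .
qed

lemma psd_zero:
  fixes S :: "real^'n^'n"
  assumes psd: "pos_semidef S" and x0: "x \<bullet> (S *v x) = 0"
  shows "S *v x = 0"
proof -
  have sym: "transpose S = S" using psd unfolding pos_semidef_def symmetric_mat_def by auto
  have yz: "y \<bullet> (S *v x) = 0" for y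
  proof -
    have "(- 2 * (y \<bullet> (S *v x))) * t + (- (y \<bullet> (S *v y))) * t^2 \<le> 0" for t
    proof -
      have "0 \<le> (x + t *\<^sub>R y) \<bullet> (S *v (x + t *\<^sub>R y))"
        using psd unfolding pos_semidef_def by blast
      moreover have "x \<bullet> (S *v y) = y \<bullet> (S *v x)"
        using sym_inner[OF sym, of x y] by (simp add: inner_commute)
      ultimately show ?thesis using x0
        by (simp add: matrix_vector_right_distrib matrix_vector_mult_scaleR inner_add_left inner_add_right
              algebra_simps power2_eq_square)
    qed
    then have "- 2 * (y \<bullet> (S *v x)) = 0" by (rule quad0)
    then show ?thesis by simp
  qed
  show ?thesis using yz[of "S *v x"] by simp
qed

lemma psd_unique:
  fixes S T :: "real^'n^'n"
  assumes S: "pos_semidef S" and T: "pos_semidef T" and eq: "S ** S = T ** T"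
  shows "S = T"
proof -
  have sS: "transpose S = S" and sT: "transpose T = T"
    using S T unfolding pos_semidef_def symmetric_mat_def by auto
  define D where "D = S - T"
  have sD: "transpose D = D" unfolding D_def using sS sT by (simp add: transpose_def vec_eq_iff)
  obtain B where B: "onb B" and eb: "\<And>b. b \<in> B \<Longrightarrow> D *v b = (b \<bullet> (D *v b)) *\<^sub>R b"
    using sym_spectral[OF sD] by blast
  have Db: "D *v b = 0" if bB: "b \<in> B" for b
  proof -
    define \<mu> where "\<mu> = b \<bullet> (D *v b)"
    have ebb: "D *v b = \<mu> *\<^sub>R b" using eb[OF bB] unfolding \<mu>_def .
    have "S *v (S *v b) - T *v (T *v b) = 0"
      using eq by (simp add: matrix_vector_mul_assoc)
    moreover have "S *v (S *v b) - T *v (T *v b) = S *v (D *v b) + D *v (T *v b)"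
      unfolding D_def by (simp add: matrix_vector_mult_diff_rdistrib matrix_vector_mult_diff_distrib algebra_simps)
    ultimately have "b \<bullet> (S *v (D *v b)) + b \<bullet> (D *v (T *v b)) = 0"
      by (metis inner_add_right inner_zero_right)
    moreover have "b \<bullet> (S *v (D *v b)) = \<mu> * (b \<bullet> (S *v b))"
      by (simp add: ebb matrix_vector_mult_scaleR)
    moreover have "b \<bullet> (D *v (T *v b)) = \<mu> * (b \<bullet> (T *v b))"
      using sym_inner[OF sD, of b "T *v b"] by (simp add: ebb)
    ultimately have sum0: "\<mu> * (b \<bullet> (S *v b) + b \<bullet> (T *v b)) = 0" by (simp add: algebra_simps)
    show ?thesis
    proof (cases "\<mu> = 0")
      case True then show ?thesis using ebb by simp
    next
      case False
      then have "b \<bullet> (S *v b) + b \<bullet> (T *v b) = 0" using sum0 by simp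
      moreover have "b \<bullet> (S *v b) \<ge> 0" "b \<bullet> (T *v b) \<ge> 0"
        using S T unfolding pos_semidef_def by auto
      ultimately have "b \<bullet> (S *v b) = 0" "b \<bullet> (T *v b) = 0" by linarith+
      then have "S *v b = 0" "T *v b = 0" using psd_zero S T by blast+
      then show ?thesis unfolding D_def by (simp add: matrix_vector_mult_diff_rdistrib)
    qed
  qed
  have "D *v x = 0" for x
  proof -
    have "D *v x = (\<Sum>b\<in>B. ((b \<bullet> (D *v b)) * (b \<bullet> x)) *\<^sub>R b)" using eig_expand[OF B eb] by metis
    also have "\<dots> = 0" using Db by (simp add: sum.neutral)
    finally show ?thesis .
  qed
  then have "D = 0" by (simp add: matrix_eq)
  then show ?thesis unfolding D_def by simp
qed

lemma sqrt_exists: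
  fixes L :: "real^'n^'n"
  assumes pd: "pos_def L"
  shows "\<exists>S. pos_semidef S \<and> S ** S = L"
proof -
  have sym: "transpose L = L" using pd unfolding pos_def_def symmetric_mat_def by auto
  obtain B where B: "onb B" and eb: "\<And>b. b \<in> B \<Longrightarrow> L *v b = (b \<bullet> (L *v b)) *\<^sub>R b"
    using sym_spectral[OF sym] by blast
  define ev where "ev b = b \<bullet> (L *v b)" for b
  have evpos: "ev b > 0" if "b \<in> B" for b
  proof -
    have "b \<noteq> 0" using B that unfolding onb_def by auto
    then show ?thesis using pd unfolding pos_def_def ev_def by auto
  qed
  define S where "S = (\<chi> i j. \<Sum>b\<in>B. sqrt (ev b) * b$i * b$j)"
  have Sx: "S *v x = (\<Sum>b\<in>B. (sqrt (ev b) * (b \<bullet> x)) *\<^sub>R b)" for x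
    unfolding S_def by (rule mat_of_basis_mult)
  have sS: "transpose S = S" unfolding S_def transpose_def by (simp add: vec_eq_iff mult_ac)
  have psd: "pos_semidef S"
    unfolding pos_semidef_def symmetric_mat_def
  proof (intro conjI allI sS)
    fix x :: "real^'n"
    have "x \<bullet> (S *v x) = (\<Sum>b\<in>B. sqrt (ev b) * (b \<bullet> x)^2)"
      by (simp add: Sx inner_sum_right inner_commute power2_eq_square mult_ac)
    also have "\<dots> \<ge> 0" using evpos by (intro sum_nonneg) (simp add: less_imp_le)
    finally show "x \<bullet> (S *v x) \<ge> 0" .
  qed
  have "S *v (S *v x) = L *v x" for x
  proof -
    have "S *v (S *v x) = (\<Sum>b\<in>B. (sqrt (ev b) * (b \<bullet> (S *v x))) *\<^sub>R b)" by (rule Sx)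
    also have "\<dots> = (\<Sum>b\<in>B. (ev b * (b \<bullet> x)) *\<^sub>R b)"
    proof (rule sum.cong)
      fix b assume bB: "b \<in> B"
      have "b \<bullet> (S *v x) = sqrt (ev b) * (b \<bullet> x)"
        unfolding Sx by (rule onb_coef[OF B bB])
      then show "(sqrt (ev b) * (b \<bullet> (S *v x))) *\<^sub>R b = (ev b * (b \<bullet> x)) *\<^sub>R b"
        using evpos[OF bB] by (simp add: mult.assoc[symmetric])
    qed simp
    also have "\<dots> = L *v x" using eig_expand[OF B eb] unfolding ev_def by metis
    finally show ?thesis .
  qed
  then have "S ** S = L" by (simp add: matrix_eq matrix_vector_mul_assoc[symmetric])
  with psd show ?thesis by blast
qed

lemma mat_sqrt_props:
  fixes L :: "real^'n^'n"
  assumes pd: "pos_def L"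
  shows "pos_semidef (mat_sqrt L) \<and> mat_sqrt L ** mat_sqrt L = L"
proof -
  obtain S where S: "pos_semidef S" "S ** S = L" using sqrt_exists[OF pd] by blast
  have "mat_sqrt L = S"
    unfolding mat_sqrt_def
  proof (rule the_equality)
    show "pos_semidef S \<and> S ** S = L" using S by blast
    fix T assume "pos_semidef T \<and> T ** T = L"
    then show "T = S" using psd_unique S by metis
  qed
  then show ?thesis using S by simp
qed

lemma inv_onb:
  fixes L :: "real^'n^'n"
  assumes B: "onb B" and eb: "\<And>b. b \<in> B \<Longrightarrow> L *v b = (b \<bullet> (L *v b)) *\<^sub>R b"
    and evpos: "\<And>b. b \<in> B \<Longrightarrow> b \<bullet> (L *v b) > 0"
  shows "matrix_inv L = (\<chi> i j. \<Sum>b\<in>B. (1 / (b \<bullet> (L *v b))) * b$i * b$j)"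
proof -
  define N where "N = (\<chi> i j. \<Sum>b\<in>B. (1 / (b \<bullet> (L *v b))) * b$i * b$j)"
  have Nx: "N *v x = (\<Sum>b\<in>B. ((1 / (b \<bullet> (L *v b))) * (b \<bullet> x)) *\<^sub>R b)" for x
    unfolding N_def by (rule mat_of_basis_mult)
  have "L *v (N *v x) = x" for x
  proof -
    have "L *v (N *v x) = (\<Sum>b\<in>B. ((b \<bullet> (L *v b)) * (b \<bullet> (N *v x))) *\<^sub>R b)"
      by (rule eig_expand[OF B eb])
    also have "\<dots> = (\<Sum>b\<in>B. (x \<bullet> b) *\<^sub>R b)"
    proof (rule sum.cong)
      fix b assume bB: "b \<in> B"
      have "b \<bullet> (N *v x) = (1 / (b \<bullet> (L *v b))) * (b \<bullet> x)"
        unfolding Nx by (rule onb_coef[OF B bB])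
      then show "((b \<bullet> (L *v b)) * (b \<bullet> (N *v x))) *\<^sub>R b = (x \<bullet> b) *\<^sub>R b"
        using evpos[OF bB] by (simp add: inner_commute)
    qed simp
    also have "\<dots> = x" using B unfolding onb_def by simp
    finally show ?thesis .
  qed
  then have LN: "L ** N = mat 1" by (simp add: matrix_eq matrix_vector_mul_assoc[symmetric])
  then have NL: "N ** L = mat 1" using matrix_left_right_inverse by blast
  have ex: "\<exists>A'. L ** A' = mat 1 \<and> A' ** L = mat 1" using LN NL by blast
  define X where "X = matrix_inv L"
  have X: "L ** X = mat 1 \<and> X ** L = mat 1"
    unfolding X_def matrix_inv_def by (rule someI_ex[OF ex])
  have "X = X ** (L ** N)" using LN by simp
  also have "\<dots> = (X ** L) ** N" by (simp add: matrix_mul_assoc)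
  also have "\<dots> = N" using X by simp
  finally show ?thesis unfolding X_def N_def .
qed

lemma det_onb:
  fixes A :: "real^'n^'n"
  assumes B: "onb B" and cB: "card B = CARD('n)"
    and eb: "\<And>b. b \<in> B \<Longrightarrow> A *v b = (b \<bullet> (A *v b)) *\<^sub>R b"
  shows "det A = (\<Prod>b\<in>B. b \<bullet> (A *v b))"
proof -
  have fin: "finite B" using B unfolding onb_def by auto
  obtain h where h: "bij_betw h (UNIV :: 'n set) B"
    using finite_same_card_bij[of "UNIV :: 'n set" B] fin cB by auto
  have hB: "h j \<in> B" for j using h bij_betwE by blast
  have hinj: "h i = h j \<Longrightarrow> i = j" for i j using h unfolding bij_betw_def inj_on_def by blast
  define P :: "real^'n^'n" where "P = (\<chi> i j. h j $ i)"
  define Dm :: "real^'n^'n" where "Dm = (\<chi> i j. if i = j then h j \<bullet> (A *v h j) else 0)"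
  have PtP: "transpose P ** P = mat 1"
  proof -
    have "(transpose P ** P) $ i $ j = mat 1 $ i $ j" for i j
    proof -
      have "(transpose P ** P) $ i $ j = h i \<bullet> h j"
        unfolding P_def by (simp add: matrix_matrix_mult_def transpose_def inner_vec_def)
      also have "\<dots> = (if i = j then 1 else 0)"
        using onb_inner_basis[OF B hB[of i] hB[of j]] hinj by auto
      finally show ?thesis by (simp add: mat_def)
    qed
    then show ?thesis by (simp add: vec_eq_iff)
  qed
  have AP: "A ** P = P ** Dm"
  proof -
    have "(A ** P) $ i $ j = (P ** Dm) $ i $ j" for i j
    proof -
      have "(A ** P) $ i $ j = (A *v h j) $ i"
        unfolding P_def by (simp add: matrix_matrix_mult_def matrix_vector_mult_def)
      also have "\<dots> = (h j \<bullet> (A *v h j)) * h j $ i" proof -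
        have gen: "\<And>c v. A *v v = c *\<^sub>R v \<Longrightarrow> (A *v v) $ i = c * v $ i" by simp
        show ?thesis by (rule gen[OF eb[OF hB[of j]]])
      qed
      also have "\<dots> = (P ** Dm) $ i $ j"
        unfolding P_def Dm_def by (simp add: matrix_matrix_mult_def if_distrib cong: if_cong)
      finally show ?thesis .
    qed
    then show ?thesis by (simp add: vec_eq_iff)
  qed
  have "det P * det P = 1" using PtP by (metis det_I det_mul det_transpose)
  then have dP: "det P \<noteq> 0" by auto
  have "det A * det P = det P * det Dm" using AP by (metis det_mul)
  then have "det A = det Dm" using dP by simp
  also have "\<dots> = (\<Prod>j\<in>UNIV. h j \<bullet> (A *v h j))"
    unfolding Dm_def by (subst det_diagonal) auto
  also have "\<dots> = (\<Prod>b\<in>B. b \<bullet> (A *v b))"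
    using prod.reindex_bij_betw[OF h, of "\<lambda>b. b \<bullet> (A *v b)"] by simp
  finally show ?thesis .
qed

lemma hadamard_aux:
  fixes B :: "(real^'n) set"
  assumes B: "onb B" and epos: "\<And>b. b \<in> B \<Longrightarrow> e b > 0"
  shows "(\<Prod>i\<in>UNIV. \<Sum>b\<in>B. (1 / e b) * b$i * b$i) * (\<Prod>b\<in>B. e b) \<ge> 1"
proof -
  have fin: "finite B" using B unfolding onb_def by auto
  define m where "m i = (\<Sum>b\<in>B. (1 / e b) * b$i * b$i)" for i
  have sw: "(\<Sum>b\<in>B. b$i * b$i) = 1" for i
    using onb_parseval[OF B, of "axis i 1" "axis i 1"] by (simp add: inner_axis' inner_axis_axis)
  have sb: "(\<Sum>i\<in>UNIV. b$i * b$i) = 1" if "b \<in> B" for b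
  proof -
    have "norm b = 1" using B that unfolding onb_def by auto
    then have "b \<bullet> b = 1" by (simp add: dot_square_norm)
    then show ?thesis by (simp add: inner_vec_def)
  qed
  have mpos: "m i > 0" for i
  proof -
    obtain b where bB: "b \<in> B" and bi: "b$i \<noteq> 0"
    proof (rule ccontr)
      assume "\<not> thesis"
      then have "\<forall>b\<in>B. b$i = 0" using that by blast
      then have "(\<Sum>b\<in>B. b$i * b$i) = 0" by simp
      with sw[of i] show False by simp
    qed
    show ?thesis unfolding m_def
    proof (rule sum_pos2[OF fin bB])
      show "0 < 1 / e b * b $ i * b $ i" using epos[OF bB] bi by (simp add: mult.assoc divide_pos_pos not_real_square_gt_zero[symmetric] del: not_real_square_gt_zero)
      fix c assume "c \<in> B"
      then show "0 \<le> 1 / e c * c $ i * c $ i" using epos[of c] by (simp add: mult.assoc)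
    qed
  qed
  have per: "- (\<Sum>b\<in>B. (b$i * b$i) * ln (e b)) \<le> ln (m i)" for i
  proof -
    have "(b$i * b$i) * (- ln (e b) - ln (m i)) \<le> (b$i * b$i) * ((1 / e b) / m i - 1)" if bB: "b \<in> B" for b
    proof (rule mult_left_mono)
      have "ln ((1 / e b) / m i) \<le> (1 / e b) / m i - 1"
        using epos[OF bB] mpos[of i] by (intro ln_le_minus_one) simp
      moreover have "ln ((1 / e b) / m i) = - ln (e b) - ln (m i)"
        using epos[OF bB] mpos[of i] by (simp add: ln_div ln_mult)
      ultimately show "- ln (e b) - ln (m i) \<le> (1 / e b) / m i - 1" by simp
    qed simp
    then have "(\<Sum>b\<in>B. (b$i * b$i) * (- ln (e b) - ln (m i))) \<le> (\<Sum>b\<in>B. (b$i * b$i) * ((1 / e b) / m i - 1))"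
      by (rule sum_mono)
    also have "\<dots> = (\<Sum>b\<in>B. (1 / e b) * b$i * b$i) / m i - (\<Sum>b\<in>B. b$i * b$i)"
      by (simp add: sum_subtractf sum_divide_distrib algebra_simps)
    also have "\<dots> = 0" using mpos[of i] sw[of i] unfolding m_def by simp
    finally have "(\<Sum>b\<in>B. (b$i * b$i) * (- ln (e b) - ln (m i))) \<le> 0" .
    moreover have "(\<Sum>b\<in>B. (b$i * b$i) * (- ln (e b) - ln (m i)))
        = - (\<Sum>b\<in>B. (b$i * b$i) * ln (e b)) - ln (m i) * (\<Sum>b\<in>B. b$i * b$i)"
      by (simp add: algebra_simps sum_subtractf sum_distrib_left sum_negf)
    ultimately show ?thesis using sw[of i] by simp
  qed
  have "- (\<Sum>b\<in>B. ln (e b)) = - (\<Sum>b\<in>B. (\<Sum>i\<in>UNIV. b$i * b$i) * ln (e b))"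
    using sb by simp
  also have "\<dots> = (\<Sum>i\<in>UNIV. - (\<Sum>b\<in>B. (b$i * b$i) * ln (e b)))"
    by (simp add: sum_distrib_right sum_negf sum.swap[of _ B UNIV])
  also have "\<dots> \<le> (\<Sum>i\<in>UNIV. ln (m i))" by (rule sum_mono) (rule per)
  finally have ineq: "0 \<le> (\<Sum>i\<in>UNIV. ln (m i)) + (\<Sum>b\<in>B. ln (e b))" by simp
  have p1: "ln (\<Prod>i\<in>UNIV. m i) = (\<Sum>i\<in>UNIV. ln (m i))"
    using mpos by (intro ln_prod) (auto simp: less_imp_neq[symmetric])
  have p2: "ln (\<Prod>b\<in>B. e b) = (\<Sum>b\<in>B. ln (e b))"
    using epos fin by (intro ln_prod) (auto simp: less_imp_neq[symmetric])
  have pos1: "(\<Prod>i\<in>UNIV. m i) > 0" using mpos by (simp add: prod_pos)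
  have pos2: "(\<Prod>b\<in>B. e b) > 0" using epos by (simp add: prod_pos)
  have "0 \<le> ln ((\<Prod>i\<in>UNIV. m i) * (\<Prod>b\<in>B. e b))"
    using ineq pos1 pos2 p1 p2 by (simp add: ln_mult)
  then have "1 \<le> (\<Prod>i\<in>UNIV. m i) * (\<Prod>b\<in>B. e b)"
    using pos1 pos2 by (simp add: ln_ge_zero_iff)
  then show ?thesis unfolding m_def .
qed

lemma mat_axis_comp: "((L::real^'n^'n) *v axis j 1) $ k = L $ k $ j"
  by (simp add: matrix_vector_mult_def axis_def if_distrib cong: if_cong)

theorem proposition2:
  fixes L :: "real^'n^'n"
  assumes "pos_def L"
  shows "lambda_max (mat_sqrt L ** diag_part (matrix_inv L) ** mat_sqrt L)
           * det L powr (1 / real CARD('n))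
         \<ge> det (diag_part L) powr (1 / real CARD('n))"
proof -
  have pd: "pos_def L" by fact
  have sym: "transpose L = L" using pd unfolding pos_def_def symmetric_mat_def by auto
  obtain B where B: "onb B" and cB: "card B = CARD('n)"
    and eb: "\<And>b. b \<in> B \<Longrightarrow> L *v b = (b \<bullet> (L *v b)) *\<^sub>R b"
    using sym_spectral[OF sym] by blast
  have fin: "finite B" using B unfolding onb_def by auto
  have evpos: "b \<bullet> (L *v b) > 0" if "b \<in> B" for b
  proof -
    have "b \<noteq> 0" using B that unfolding onb_def by auto
    then show ?thesis using pd unfolding pos_def_def by auto
  qed
  define N where "N = matrix_inv L"
  have N: "N = (\<chi> i j. \<Sum>b\<in>B. (1 / (b \<bullet> (L *v b))) * b$i * b$j)"
    unfolding N_def by (rule inv_onb[OF B eb evpos])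
  define m where "m i = N $ i $ i" for i
  have m_eq: "m i = (\<Sum>b\<in>B. (1 / (b \<bullet> (L *v b))) * b$i * b$i)" for i
    unfolding m_def N by simp
  have m_nonneg: "m i \<ge> 0" for i
    unfolding m_eq
  proof (intro sum_nonneg)
    fix b assume "b \<in> B"
    then have "b \<bullet> (L *v b) > 0" by (rule evpos)
    then show "0 \<le> 1 / (b \<bullet> (L *v b)) * b $ i * b $ i" by (simp add: mult.assoc)
  qed
  have detL: "det L = (\<Prod>b\<in>B. b \<bullet> (L *v b))" by (rule det_onb[OF B cB eb])
  have detpos: "det L > 0" unfolding detL using evpos by (simp add: prod_pos)
  have had: "(\<Prod>i\<in>UNIV. m i) * det L \<ge> 1"
    unfolding detL m_eq by (rule hadamard_aux[OF B evpos])
  define S where "S = mat_sqrt L"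
  have Sp: "pos_semidef S" "S ** S = L" using mat_sqrt_props[OF pd] unfolding S_def by auto
  have sS: "transpose S = S" using Sp unfolding pos_semidef_def symmetric_mat_def by auto
  define Dg where "Dg = diag_part N"
  have sDg: "transpose Dg = Dg" unfolding Dg_def diag_part_def transpose_def by (simp add: vec_eq_iff)
  have Dgv: "Dg *v z = (\<chi> k. m k * z $ k)" for z
    unfolding Dg_def diag_part_def m_def
    by (simp add: vec_eq_iff matrix_vector_mult_def if_distrib[of "\<lambda>x. x * _"] cong: if_cong)
  define M where "M = S ** Dg ** S"
  have sM: "transpose M = M" unfolding M_def
    by (simp add: matrix_transpose_mul sS sDg matrix_mul_assoc)
  define lam where "lam = lambda_max M"
  have Lii: "L $ i $ i > 0" for i
  proof -
    have "(axis i 1 :: real^'n) \<noteq> 0" by (simp add: axis_eq_0_iff)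
    then have "axis i 1 \<bullet> (L *v axis i 1) > 0" using pd unfolding pos_def_def by blast
    then show ?thesis by (simp add: inner_axis' mat_axis_comp)
  qed
  have lam_ge: "m i * L $ i $ i \<le> lam" for i
  proof -
    define e :: "real^'n" where "e = axis i 1"
    define y where "y = S *v e"
    have SSe: "S *v y = L *v e" unfolding y_def using Sp by (simp add: matrix_vector_mul_assoc)
    have yy: "y \<bullet> y = L $ i $ i"
    proof -
      have "y \<bullet> y = (S *v y) \<bullet> e" unfolding y_def using sym_inner[OF sS, of "S *v e" e]
        by (simp add: inner_commute)
      also have "\<dots> = L $ i $ i" unfolding SSe e_def by (simp add: inner_commute inner_axis' mat_axis_comp)
      finally show ?thesis .
    qed
    have "y \<bullet> (M *v y) = y \<bullet> (S *v (Dg *v (S *v y)))"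
      unfolding M_def by (simp add: matrix_vector_mul_assoc matrix_mul_assoc)
    also have "\<dots> = (S *v y) \<bullet> (Dg *v (S *v y))" by (rule sym_inner[OF sS])
    also have "\<dots> = (\<Sum>k\<in>UNIV. m k * (L $ k $ i)^2)"
      unfolding SSe Dgv e_def by (simp add: inner_vec_def mat_axis_comp power2_eq_square mult_ac)
    finally have yMy: "y \<bullet> (M *v y) = (\<Sum>k\<in>UNIV. m k * (L $ k $ i)^2)" .
    have "m i * (L $ i $ i)^2 \<le> (\<Sum>k\<in>UNIV. m k * (L $ k $ i)^2)"
      by (rule member_le_sum) (auto simp: m_nonneg)
    also have "\<dots> \<le> lam * (y \<bullet> y)" unfolding lam_def yMy[symmetric] by (rule lambda_max_rayleigh[OF sM])
    finally have "(m i * L $ i $ i) * L $ i $ i \<le> lam * L $ i $ i" unfolding yy by (simp add: power2_eq_square mult_ac)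
    then show ?thesis using Lii[of i] by simp
  qed
  have mL_nonneg: "0 \<le> m i * L $ i $ i" for i using m_nonneg Lii[of i] by simp
  have prodle: "(\<Prod>i\<in>UNIV. m i * L $ i $ i) \<le> lam ^ CARD('n)"
  proof -
    have "(\<Prod>i\<in>UNIV. m i * L $ i $ i) \<le> (\<Prod>i\<in>(UNIV::'n set). lam)"
      by (rule prod_mono) (use mL_nonneg lam_ge in auto)
    then show ?thesis by simp
  qed
  define P where "P = (\<Prod>i\<in>UNIV. L $ i $ i)"
  have Ppos: "P > 0" unfolding P_def using Lii by (simp add: prod_pos)
  have detD: "det (diag_part L) = P" unfolding P_def diag_part_def by (subst det_diagonal) auto
  have "P \<le> P * ((\<Prod>i\<in>UNIV. m i) * det L)" using had Ppos by simp
  also have "\<dots> = (\<Prod>i\<in>UNIV. m i * L $ i $ i) * det L"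
    unfolding P_def by (simp add: prod.distrib mult_ac)
  also have "\<dots> \<le> lam ^ CARD('n) * det L" using prodle detpos by simp
  finally have main: "P \<le> lam ^ CARD('n) * det L" .
  have lampos: "lam > 0"
  proof -
    have "lam \<ge> 0" using lam_ge[of undefined] mL_nonneg[of undefined] by linarith
    moreover have "lam \<noteq> 0"
    proof
      assume "lam = 0"
      then have "lam ^ CARD('n) * det L = 0" by simp
      then show False using main Ppos by linarith
    qed
    ultimately show ?thesis by simp
  qed
  define n :: real where "n = real CARD('n)"
  have npos: "n > 0" unfolding n_def by simp
  have "P powr (1 / n) \<le> (lam ^ CARD('n) * det L) powr (1 / n)"
    using main Ppos npos by (intro powr_mono2) auto
  also have "\<dots> = (lam ^ CARD('n)) powr (1 / n) * det L powr (1 / n)"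
    using lampos detpos by (simp add: powr_mult)
  also have "(lam ^ CARD('n)) powr (1 / n) = lam"
  proof -
    have "lam ^ CARD('n) = lam powr n" unfolding n_def using lampos by (simp add: powr_realpow)
    then show ?thesis using npos lampos by (simp add: powr_powr)
  qed
  finally show ?thesis unfolding detD n_def lam_def M_def S_def Dg_def N_def by simp
qed

end
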